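(* If $\Xi$ is an extremal point of $\mathcal C$, then $\operatorname{rank}(\Xi)^2\le\sum_{k\in S}m_k^2$.
   Context: Let $G$ be a group with a unitary representation $g\mapsto U_g$ on a finite-dimensional Hilbert space $\mathcal H$, decomposed as $\mathcal H=\bigoplus_{k\in S}(\mathcal H_k\otimes\mathbb C^{m_k})$, where $S$ is the set of equivalence classes of irreducible components, $\mathcal H_k$ carries the irreducible representation of class $k$ and $m_k$ is its multiplicity. Let $d_{\mathcal H_k}=\dim\mathcal H_k$, let $P_k$ be the orthogonal projector onto $\mathcal H_k\otimes\mathbb C^{m_k}$, and let $\operatorname{Tr}_{\mathcal H_k}$ be the partial trace $\mathcal B(\mathcal H_k\otimes\mathbb C^{m_k})\to\mathcal B(\mathbb C^{m_k})$. Let $\mathcal C$ be the convex set of operators $\Xi\ge0$ on $\mathcal H$ with $\operatorname{Tr}_{\mathcal H_k}(P_k\Xi P_k)=d_{\mathcal H_k}I_{m_k}$ for all $k\in S$. *)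

theory Defs
  imports "Jordan_Normal_Form.Schur_Decomposition" "Jordan_Normal_Form.DL_Rank"
begin

text \<open>Block data of the isotypic decomposition H = (+)_{k<s} (H_k (x) C^{m_k}),
  with dim H_k = d k.  The Hilbert space is C^N, N = sum_k d k * m k, and the
  basis vector e_i (x) f_j (i < d k, j < m k) of the k-th summand has index
  blk_off d m k + i * m k + j (blocks in order of k, Kronecker ordering inside).\<close>

definition blk_off :: "(nat \<Rightarrow> nat) \<Rightarrow> (nat \<Rightarrow> nat) \<Rightarrow> nat \<Rightarrow> nat" where
  "blk_off d m k = (\<Sum>l<k. d l * m l)"

definition tot_dim :: "nat \<Rightarrow> (nat \<Rightarrow> nat) \<Rightarrow> (nat \<Rightarrow> nat) \<Rightarrow> nat" where
  "tot_dim s d m = (\<Sum>k<s. d k * m k)"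

definition psd_mat :: "nat \<Rightarrow> complex mat \<Rightarrow> bool" where
  "psd_mat n A \<longleftrightarrow> A \<in> carrier_mat n n \<and> mat_adjoint A = A \<and>
     (\<forall>v \<in> carrier_vec n. Im (conjugate v \<bullet> (A *\<^sub>v v)) = 0 \<and> Re (conjugate v \<bullet> (A *\<^sub>v v)) \<ge> 0)"

definition ptrace_blk :: "(nat \<Rightarrow> nat) \<Rightarrow> (nat \<Rightarrow> nat) \<Rightarrow> nat \<Rightarrow> complex mat \<Rightarrow> complex mat" where
  "ptrace_blk d m k A = mat (m k) (m k) (\<lambda>(j, j').
      \<Sum>i<d k. A $$ (blk_off d m k + i * m k + j, blk_off d m k + i * m k + j'))"

definition setC :: "nat \<Rightarrow> (nat \<Rightarrow> nat) \<Rightarrow> (nat \<Rightarrow> nat) \<Rightarrow> complex mat set" where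
  "setC s d m = {X. psd_mat (tot_dim s d m) X \<and>
      (\<forall>k<s. ptrace_blk d m k X = of_nat (d k) \<cdot>\<^sub>m 1\<^sub>m (m k))}"

definition extreme_point_mat :: "complex mat \<Rightarrow> complex mat set \<Rightarrow> bool" where
  "extreme_point_mat X K \<longleftrightarrow> X \<in> K \<and>
     (\<forall>A\<in>K. \<forall>B\<in>K. \<forall>t::real. 0 < t \<and> t < 1 \<and>
        X = complex_of_real t \<cdot>\<^sub>m A + complex_of_real (1 - t) \<cdot>\<^sub>m B \<longrightarrow> A = B)"

end

theory Submission
  imports Defs
begin

lemma adj_index:
  assumes "A \<in> carrier_mat n n" "i < n" "j < n"
  shows "mat_adjoint A $$ (i,j) = cnj (A $$ (j,i))"
  using assms unfolding mat_adjoint_def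
  by (simp add: mat_of_rows_def)

lemma adj_carrier: "A \<in> carrier_mat n n \<Longrightarrow> mat_adjoint A \<in> carrier_mat n n"
  unfolding mat_adjoint_def by (simp add: mat_of_rows_def)

lemma kernel_nonzero:
  fixes A :: "'a::field mat"
  assumes A: "A \<in> carrier_mat M N" and MN: "M < N"
  shows "\<exists>v\<in>carrier_vec N. v \<noteq> 0\<^sub>v N \<and> A *\<^sub>v v = 0\<^sub>v M"
proof (cases "distinct (cols A)")
  case True
  interpret vec_space "TYPE('a)" M .
  have sub: "set (cols A) \<subseteq> carrier_vec M" using A cols_dim by blast
  have card: "card (set (cols A)) = N" using True A distinct_card by fastforce
  have "lin_dep (set (cols A))"
  proof (rule ccontr)
    assume "\<not> lin_dep (set (cols A))"
    from li_le_dim(2)[OF _ sub this] have "card (set (cols A)) \<le> M"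
      using dim_is_n fin_dim by simp
    then show False using card MN by simp
  qed
  from lin_depE[OF A this True] show ?thesis by blast
next
  case False
  then obtain i j where ij: "i < length (cols A)" "j < length (cols A)" "i \<noteq> j" "cols A ! i = cols A ! j"
    by (metis distinct_conv_nth)
  hence ij2: "i < N" "j < N" "col A i = col A j" using A by auto
  define v :: "'a vec" where "v = unit_vec N i - unit_vec N j"
  have v: "v \<in> carrier_vec N" unfolding v_def by simp
  have "v $ i \<noteq> 0" unfolding v_def using ij2 ij(3) by simp
  hence "v \<noteq> 0\<^sub>v N" using ij2 by auto
  moreover have "A *\<^sub>v v = 0\<^sub>v M"
  proof -
    have "A *\<^sub>v v = A *\<^sub>v unit_vec N i - A *\<^sub>v unit_vec N j"
      unfolding v_def using A by (simp add: mult_minus_distrib_mat_vec)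
    also have "\<dots> = 0\<^sub>v M"
    proof -
      have "\<And>k. k < N \<Longrightarrow> A *\<^sub>v unit_vec N k = col A k"
        using A by (intro eq_vecI) (auto simp: row_def col_def)
      then show ?thesis using ij2 A by simp
    qed
    finally show ?thesis .
  qed
  ultimately show ?thesis using v by blast
qed

lemma lin_sys:
  fixes c :: "'e \<Rightarrow> 'q \<Rightarrow> 'a::field"
  assumes E: "finite E" and Q: "finite Q" and EQ: "card E < card Q"
  shows "\<exists>x. (\<exists>q\<in>Q. x q \<noteq> 0) \<and> (\<forall>e\<in>E. (\<Sum>q\<in>Q. c e q * x q) = 0)"
proof -
  obtain g where g: "bij_betw g {0..<card E} E" using ex_bij_betw_nat_finite[OF E] by blast
  obtain h where h: "bij_betw h {0..<card Q} Q" using ex_bij_betw_nat_finite[OF Q] by blast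
  define A where "A = mat (card E) (card Q) (\<lambda>(p,j). c (g p) (h j))"
  have A: "A \<in> carrier_mat (card E) (card Q)" unfolding A_def by simp
  from kernel_nonzero[OF A EQ] obtain v where v: "v \<in> carrier_vec (card Q)" "v \<noteq> 0\<^sub>v (card Q)"
    "A *\<^sub>v v = 0\<^sub>v (card E)" by blast
  define x where "x q = v $ (inv_into {0..<card Q} h q)" for q
  have xh: "x (h j) = v $ j" if "j < card Q" for j
    unfolding x_def using h that by (simp add: bij_betw_inv_into_left)
  have "\<exists>q\<in>Q. x q \<noteq> 0"
  proof -
    obtain j where j: "j < card Q" "v $ j \<noteq> 0" using v
      by (metis carrier_vecD eq_vecI index_zero_vec(1) index_zero_vec(2))
    then show ?thesis using xh[OF j(1)] h by (metis atLeastLessThan_iff bij_betwE zero_le)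
  qed
  moreover have "(\<Sum>q\<in>Q. c e q * x q) = 0" if e: "e \<in> E" for e
  proof -
    obtain p where p: "p < card E" "g p = e" using g e
      by (metis atLeastLessThan_iff bij_betw_iff_bijections)
    have "(\<Sum>q\<in>Q. c e q * x q) = (\<Sum>j\<in>{0..<card Q}. c e (h j) * x (h j))"
      using h sum.reindex[of h "{0..<card Q}" "\<lambda>q. c e q * x q"] by (simp add: bij_betw_def)
    also have "\<dots> = (\<Sum>j\<in>{0..<card Q}. c e (h j) * v $ j)"
      using xh by (intro sum.cong) auto
    also have "\<dots> = (A *\<^sub>v v) $ p"
      using p v(1) unfolding A_def by (auto simp: mult_mat_vec_def scalar_prod_def intro!: sum.cong)
    also have "\<dots> = 0" using v(3) p by simp
    finally show ?thesis .
  qed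
  ultimately show ?thesis by blast
qed

lemma rank_indep:
  fixes X :: "complex mat"
  assumes X: "X \<in> carrier_mat n n"
  shows "\<exists>B \<subseteq> {..<n}. card B = vec_space.rank n X \<and>
    (\<forall>l. (\<forall>i<n. (\<Sum>a\<in>B. l a * X$$(i,a)) = 0) \<longrightarrow> (\<forall>a\<in>B. l a = 0))"
proof -
  interpret vec_space "TYPE(complex)" n .
  obtain S where S: "maximal S (\<lambda>T. T \<subseteq> set (cols X) \<and> lin_indpt T)"
    using maximal_exists[of "(\<lambda>T. T \<subseteq> set (cols X) \<and> lin_indpt T)" "card (set (cols X))" "{}"]
    by (meson List.finite_set card_mono empty_iff empty_subsetI finite_lin_indpt2 rev_finite_subset)
  have rk: "rank X = card S" by (rule rank_card_indpt[OF X S])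
  have Ssub: "S \<subseteq> set (cols X)" and Sli: "lin_indpt S" using S unfolding maximal_def by auto
  have finS: "finite S" using Ssub finite_subset by blast
  have Scar: "S \<subseteq> carrier_vec n" using Ssub X cols_dim by blast
  have ex: "\<exists>a. a < n \<and> col X a = s" if "s \<in> S" for s
    using Ssub that X by (metis carrier_matD(2) cols_length cols_nth in_set_conv_nth subsetD)
  define g where "g s = (SOME a. a < n \<and> col X a = s)" for s
  have g: "g s < n \<and> col X (g s) = s" if "s \<in> S" for s
    unfolding g_def using someI_ex[OF ex[OF that]] .
  have inj: "inj_on g S" by (metis g inj_onI)
  define B where "B = g ` S"
  have "B \<subseteq> {..<n}" unfolding B_def using g by auto
  moreover have "card B = rank X" unfolding B_def rk using inj card_image by blast
  moreover have "\<forall>a\<in>B. l a = 0" if H: "\<forall>i<n. (\<Sum>a\<in>B. l a * X$$(i,a)) = 0" for l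
  proof (rule ccontr)
    assume "\<not> (\<forall>a\<in>B. l a = 0)"
    then obtain s0 where s0: "s0 \<in> S" "l (g s0) \<noteq> 0" unfolding B_def by auto
    define f where "f s = l (g s)" for s
    have "lincomb f S = 0\<^sub>v n"
    proof (rule eq_vecI)
      show "dim_vec (lincomb f S) = dim_vec (0\<^sub>v n)"
        using lincomb_closed[OF Scar] by (simp add: Pi_def)
      fix i assume "i < dim_vec (0\<^sub>v n)"
      hence i: "i < n" by simp
      have "lincomb f S $ i = (\<Sum>s\<in>S. f s * s $ i)" by (rule lincomb_index[OF i Scar])
      also have "\<dots> = (\<Sum>s\<in>S. l (g s) * X $$ (i, g s))"
        using g i X unfolding f_def by (intro sum.cong) (auto, metis index_col carrier_matD)
      also have "\<dots> = (\<Sum>a\<in>B. l a * X$$(i,a))"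
        unfolding B_def using sum.reindex[OF inj, of "\<lambda>a. l a * X$$(i,a)"] by simp
      also have "\<dots> = 0" using H i by blast
      finally show "lincomb f S $ i = 0\<^sub>v n $ i" using i by simp
    qed
    hence "lin_dep S"
      using lin_dep_crit[OF finS subset_refl _ s0(1), of f] s0(2) unfolding f_def
      by (simp add: Pi_def)
    thus False using Sli by simp
  qed
  ultimately show ?thesis by blast
qed

definition qfI :: "nat set \<Rightarrow> (nat \<Rightarrow> nat \<Rightarrow> complex) \<Rightarrow> (nat \<Rightarrow> complex) \<Rightarrow> complex" where
  "qfI I A w = (\<Sum>i\<in>I. \<Sum>j\<in>I. cnj (w i) * A i j * w j)"

lemma qfI_bound:
  assumes I: "finite I"
  shows "cmod (qfI I A w) \<le> (\<Sum>i\<in>I. \<Sum>j\<in>I. cmod (A i j)) * (\<Sum>i\<in>I. (cmod (w i))\<^sup>2)"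
proof -
  define S where "S = (\<Sum>i\<in>I. (cmod (w i))\<^sup>2)"
  have sq: "(cmod (w i))\<^sup>2 \<le> S" if "i \<in> I" for i
    unfolding S_def by (rule member_le_sum[OF that _ I]) simp
  have ab: "cmod (w i) * cmod (w j) \<le> S" if "i \<in> I" "j \<in> I" for i j
  proof -
    have "2 * (cmod (w i) * cmod (w j)) \<le> (cmod (w i))\<^sup>2 + (cmod (w j))\<^sup>2"
      using sum_squares_bound[of "cmod (w i)" "cmod (w j)"] by (simp add: power2_eq_square)
    then show ?thesis using sq[OF that(1)] sq[OF that(2)] by simp
  qed
  have "cmod (qfI I A w) \<le> (\<Sum>i\<in>I. cmod (\<Sum>j\<in>I. cnj (w i) * A i j * w j))"
    unfolding qfI_def by (rule norm_sum)
  also have "\<dots> \<le> (\<Sum>i\<in>I. \<Sum>j\<in>I. cmod (cnj (w i) * A i j * w j))"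
    by (intro sum_mono norm_sum)
  also have "\<dots> = (\<Sum>i\<in>I. \<Sum>j\<in>I. cmod (A i j) * (cmod (w i) * cmod (w j)))"
    by (simp add: norm_mult mult_ac)
  also have "\<dots> \<le> (\<Sum>i\<in>I. \<Sum>j\<in>I. cmod (A i j) * S)"
    using ab by (intro sum_mono mult_left_mono) auto
  also have "\<dots> = (\<Sum>i\<in>I. \<Sum>j\<in>I. cmod (A i j)) * S"
    by (simp add: sum_distrib_right)
  finally show ?thesis unfolding S_def .
qed

lemma qfI_herm:
  assumes "\<forall>i\<in>I. \<forall>j\<in>I. A i j = cnj (A j i)"
  shows "cnj (qfI I A w) = qfI I A w"
proof -
  have "cnj (qfI I A w) = (\<Sum>i\<in>I. \<Sum>j\<in>I. w i * cnj (A i j) * cnj (w j))"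
    unfolding qfI_def by simp
  also have "\<dots> = (\<Sum>i\<in>I. \<Sum>j\<in>I. cnj (w j) * A j i * w i)"
  proof (intro sum.cong refl)
    fix i j assume "i \<in> I" "j \<in> I"
    then have "cnj (A i j) = A j i" using assms by (metis complex_cnj_cnj)
    then show "w i * cnj (A i j) * cnj (w j) = cnj (w j) * A j i * w i" by (simp add: mult_ac)
  qed
  also have "\<dots> = qfI I A w" unfolding qfI_def by (rule sum.swap)
  finally show ?thesis .
qed

lemma qfI_real: "cnj z = z \<Longrightarrow> Im z = 0"
  by (metis Reals_cnj_iff complex_is_Real_iff)

lemma sprod_qfI:
  assumes A: "A \<in> carrier_mat n n" and v: "v \<in> carrier_vec n"
  shows "conjugate v \<bullet> (A *\<^sub>v v) = qfI {..<n} (\<lambda>i j. A $$ (i,j)) (\<lambda>i. v $ i)"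
proof -
  have r: "(A *\<^sub>v v) $ i = (\<Sum>j<n. A $$ (i,j) * v $ j)" if "i < n" for i
    using A v that by (simp add: scalar_prod_def atLeast0LessThan)
  have "conjugate v \<bullet> (A *\<^sub>v v) = (\<Sum>i<n. cnj (v $ i) * (A *\<^sub>v v) $ i)"
    using A v by (simp add: scalar_prod_def atLeast0LessThan)
  also have "\<dots> = (\<Sum>i<n. cnj (v $ i) * (\<Sum>j<n. A $$ (i,j) * v $ j))"
    using r by simp
  also have "\<dots> = qfI {..<n} (\<lambda>i j. A $$ (i,j)) (\<lambda>i. v $ i)"
    unfolding qfI_def by (simp add: sum_distrib_left mult.assoc)
  finally show ?thesis .
qed

lemma psd_qfI:
  assumes "psd_mat n A"
  shows "Im (qfI {..<n} (\<lambda>i j. A $$ (i,j)) w) = 0 \<and> Re (qfI {..<n} (\<lambda>i j. A $$ (i,j)) w) \<ge> 0"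
proof -
  have A: "A \<in> carrier_mat n n" using assms unfolding psd_mat_def by auto
  define v where "v = vec n w"
  have v: "v \<in> carrier_vec n" unfolding v_def by simp
  have "qfI {..<n} (\<lambda>i j. A $$ (i,j)) w = qfI {..<n} (\<lambda>i j. A $$ (i,j)) (\<lambda>i. v $ i)"
    unfolding qfI_def v_def by (intro sum.cong) auto
  also have "\<dots> = conjugate v \<bullet> (A *\<^sub>v v)" using sprod_qfI[OF A v] by simp
  finally show ?thesis using assms v unfolding psd_mat_def by auto
qed

lemma sq_bound:
  assumes I: "finite I" and herm: "\<forall>i\<in>I. \<forall>j\<in>I. X i j = cnj (X j i)"
    and psd: "\<And>u. Re (qfI I X u) \<ge> 0"
    and M: "(\<Sum>i\<in>I. \<Sum>j\<in>I. cmod (X i j)) \<le> M" and M0: "M > 0"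
  shows "(\<Sum>i\<in>I. (cmod (\<Sum>j\<in>I. X i j * v j))\<^sup>2) \<le> M * Re (qfI I X v)"
proof -
  define w where "w i = (\<Sum>j\<in>I. X i j * v j)" for i
  define W where "W = (\<Sum>i\<in>I. (cmod (w i))\<^sup>2)"
  define z where "z i = complex_of_real M * v i - w i" for i
  have cw: "(\<Sum>i\<in>I. cnj (v i) * X i j) = cnj (w j)" if "j \<in> I" for j
  proof -
    have "cnj (w j) = (\<Sum>i\<in>I. cnj (X j i) * cnj (v i))" unfolding w_def by simp
    also have "\<dots> = (\<Sum>i\<in>I. cnj (v i) * X i j)"
      using herm that by (intro sum.cong refl) (metis mult.commute)
    finally show ?thesis by simp
  qed
  have ww: "(\<Sum>i\<in>I. cnj (w i) * w i) = complex_of_real W"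
    unfolding W_def of_real_sum by (intro sum.cong refl) (metis complex_norm_square mult.commute of_real_power)
  have k1: "(\<Sum>i\<in>I. \<Sum>j\<in>I. cnj (v i) * X i j * w j) = complex_of_real W"
  proof -
    have "(\<Sum>i\<in>I. \<Sum>j\<in>I. cnj (v i) * X i j * w j) = (\<Sum>j\<in>I. \<Sum>i\<in>I. cnj (v i) * X i j * w j)"
      by (rule sum.swap)
    also have "\<dots> = (\<Sum>j\<in>I. (\<Sum>i\<in>I. cnj (v i) * X i j) * w j)"
      by (simp add: sum_distrib_right)
    also have "\<dots> = (\<Sum>j\<in>I. cnj (w j) * w j)" using cw by simp
    finally show ?thesis using ww by simp
  qed
  have k2: "(\<Sum>i\<in>I. \<Sum>j\<in>I. cnj (w i) * X i j * v j) = complex_of_real W"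
  proof -
    have "(\<Sum>i\<in>I. \<Sum>j\<in>I. cnj (w i) * X i j * v j) = (\<Sum>i\<in>I. cnj (w i) * w i)"
      unfolding w_def by (simp add: sum_distrib_left mult.assoc)
    then show ?thesis using ww by simp
  qed
  have e: "cnj (z i) * X i j * z j = complex_of_real (M*M) * (cnj (v i) * X i j * v j)
      - complex_of_real M * (cnj (v i) * X i j * w j) - complex_of_real M * (cnj (w i) * X i j * v j)
      + cnj (w i) * X i j * w j" for i j
    unfolding z_def by (simp add: algebra_simps)
  have "qfI I X z = complex_of_real (M*M) * qfI I X v
      - complex_of_real M * (\<Sum>i\<in>I. \<Sum>j\<in>I. cnj (v i) * X i j * w j)
      - complex_of_real M * (\<Sum>i\<in>I. \<Sum>j\<in>I. cnj (w i) * X i j * v j) + qfI I X w"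
    unfolding qfI_def e
    by (simp add: sum.distrib sum_subtractf sum_distrib_left)
  hence "qfI I X z = complex_of_real (M*M) * qfI I X v - complex_of_real M * complex_of_real W
      - complex_of_real M * complex_of_real W + qfI I X w" unfolding k1 k2 .
  hence "Re (qfI I X z) = M*M * Re (qfI I X v) - 2 * M * W + Re (qfI I X w)" by simp
  moreover have "Re (qfI I X z) \<ge> 0" by (rule psd)
  moreover have "Re (qfI I X w) \<le> M * W"
  proof -
    have "Re (qfI I X w) \<le> cmod (qfI I X w)" by (rule complex_Re_le_cmod)
    also have "\<dots> \<le> (\<Sum>i\<in>I. \<Sum>j\<in>I. cmod (X i j)) * W" unfolding W_def by (rule qfI_bound[OF I])
    also have "\<dots> \<le> M * W" using M unfolding W_def by (intro mult_right_mono) (auto intro: sum_nonneg)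
    finally show ?thesis .
  qed
  ultimately have "M * W \<le> M * (M * Re (qfI I X v))" by (simp add: algebra_simps)
  hence "W \<le> M * Re (qfI I X v)" using M0 by simp
  thus ?thesis unfolding W_def w_def .
qed

lemma idx_lt:
  assumes "k < s" "i < d k" "j < m k"
  shows "blk_off d m k + i * m k + j < tot_dim s d m"
proof -
  have "i * m k + j < i * m k + m k" using assms by simp
  also have "\<dots> = Suc i * m k" by simp
  also have "\<dots> \<le> d k * m k" using assms by (intro mult_le_mono1) simp
  finally have 1: "blk_off d m k + i * m k + j < blk_off d m (Suc k)"
    unfolding blk_off_def by simp
  have "blk_off d m (Suc k) \<le> tot_dim s d m"
    unfolding blk_off_def tot_dim_def using assms(1) by (intro sum_mono2) auto
  with 1 show ?thesis by simp
qed

lemma qfI_sandwich: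
  assumes "finite I" "finite J"
  shows "qfI I (\<lambda>p q. \<Sum>a\<in>J. \<Sum>b\<in>J. L p a * g a b * R b q) v =
    (\<Sum>a\<in>J. \<Sum>b\<in>J. (\<Sum>p\<in>I. cnj (v p) * L p a) * g a b * (\<Sum>q\<in>I. R b q * v q))"
proof -
  have "qfI I (\<lambda>p q. \<Sum>a\<in>J. \<Sum>b\<in>J. L p a * g a b * R b q) v =
     (\<Sum>p\<in>I. \<Sum>q\<in>I. \<Sum>a\<in>J. \<Sum>b\<in>J. cnj (v p) * L p a * g a b * R b q * v q)"
    unfolding qfI_def by (simp add: sum_distrib_left sum_distrib_right mult.assoc)
  also have "\<dots> = (\<Sum>p\<in>I. \<Sum>a\<in>J. \<Sum>q\<in>I. \<Sum>b\<in>J. cnj (v p) * L p a * g a b * R b q * v q)"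
    by (intro sum.cong refl) (rule sum.swap)
  also have "\<dots> = (\<Sum>a\<in>J. \<Sum>p\<in>I. \<Sum>q\<in>I. \<Sum>b\<in>J. cnj (v p) * L p a * g a b * R b q * v q)"
    by (rule sum.swap)
  also have "\<dots> = (\<Sum>a\<in>J. \<Sum>p\<in>I. \<Sum>b\<in>J. \<Sum>q\<in>I. cnj (v p) * L p a * g a b * R b q * v q)"
    by (intro sum.cong refl) (rule sum.swap)
  also have "\<dots> = (\<Sum>a\<in>J. \<Sum>b\<in>J. \<Sum>p\<in>I. \<Sum>q\<in>I. cnj (v p) * L p a * g a b * R b q * v q)"
    by (intro sum.cong refl) (rule sum.swap)
  also have "\<dots> = (\<Sum>a\<in>J. \<Sum>b\<in>J. (\<Sum>p\<in>I. cnj (v p) * L p a) * g a b * (\<Sum>q\<in>I. R b q * v q))"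
    by (intro sum.cong refl, simp only: sum_distrib_right sum_product) (simp add: mult.assoc sum_distrib_left)
  finally show ?thesis .
qed

definition Dm :: "complex mat \<Rightarrow> nat set \<Rightarrow> (nat \<Rightarrow> nat \<Rightarrow> complex) \<Rightarrow> nat \<Rightarrow> nat \<Rightarrow> complex" where
  "Dm X B f p q = (\<Sum>a\<in>B. \<Sum>b\<in>B. X$$(p,a) * f a b * X$$(b,q))"

lemma Dm_lin: "Dm X B (\<lambda>a b. \<alpha> * f a b + \<beta> * g a b) p q = \<alpha> * Dm X B f p q + \<beta> * Dm X B g p q"
  unfolding Dm_def by (simp add: sum.distrib sum_distrib_left algebra_simps)

lemma Dm_cong: "(\<forall>a\<in>B. \<forall>b\<in>B. f a b = g a b) \<Longrightarrow> Dm X B f p q = Dm X B g p q"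
  unfolding Dm_def by (intro sum.cong refl) auto

lemma Dm_adj:
  assumes herm: "\<forall>i<n. \<forall>j<n. X$$(i,j) = cnj (X$$(j,i))" and B: "B \<subseteq> {..<n}"
    and p: "p < n" and q: "q < n"
  shows "Dm X B (\<lambda>a b. cnj (f b a)) p q = cnj (Dm X B f q p)"
proof -
  have "cnj (Dm X B f q p) = (\<Sum>a\<in>B. \<Sum>b\<in>B. cnj (X$$(q,a)) * cnj (f a b) * cnj (X$$(b,p)))"
    unfolding Dm_def by simp
  also have "\<dots> = (\<Sum>a\<in>B. \<Sum>b\<in>B. X$$(p,b) * cnj (f a b) * X$$(a,q))"
  proof (intro sum.cong refl)
    fix a b assume ab: "a \<in> B" "b \<in> B"
    then have "a < n" "b < n" using B by auto
    then have "cnj (X$$(q,a)) = X$$(a,q)" "cnj (X$$(b,p)) = X$$(p,b)"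
      using herm p q by (metis complex_cnj_cnj)+
    then show "cnj (X$$(q,a)) * cnj (f a b) * cnj (X$$(b,p)) = X$$(p,b) * cnj (f a b) * X$$(a,q)"
      by (simp add: mult_ac)
  qed
  also have "\<dots> = Dm X B (\<lambda>a b. cnj (f b a)) p q"
    unfolding Dm_def by (rule sum.swap)
  finally show ?thesis by simp
qed

lemma Dm_nz:
  assumes herm: "\<forall>i<n. \<forall>j<n. X$$(i,j) = cnj (X$$(j,i))" and B: "B \<subseteq> {..<n}"
    and ind: "\<forall>l. (\<forall>i<n. (\<Sum>a\<in>B. l a * X$$(i,a)) = 0) \<longrightarrow> (\<forall>a\<in>B. l a = 0)"
    and nz: "a0 \<in> B" "b0 \<in> B" "f a0 b0 \<noteq> 0"
  shows "\<exists>p<n. \<exists>q<n. Dm X B f p q \<noteq> 0"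
proof (rule ccontr)
  assume "\<not> ?thesis"
  hence z: "\<forall>p<n. \<forall>q<n. Dm X B f p q = 0" by blast
  have s1: "(\<Sum>b\<in>B. f a b * X$$(b,q)) = 0" if q: "q < n" and a: "a \<in> B" for q a
  proof -
    have "\<forall>p<n. (\<Sum>a\<in>B. (\<Sum>b\<in>B. f a b * X$$(b,q)) * X$$(p,a)) = 0"
    proof (intro allI impI)
      fix p assume p: "p < n"
      have "(\<Sum>a\<in>B. (\<Sum>b\<in>B. f a b * X$$(b,q)) * X$$(p,a)) = Dm X B f p q"
        unfolding Dm_def by (simp add: sum_distrib_left sum_distrib_right mult_ac)
      then show "(\<Sum>a\<in>B. (\<Sum>b\<in>B. f a b * X$$(b,q)) * X$$(p,a)) = 0" using z p q by simp
    qed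
    then show ?thesis using spec[OF ind, of "\<lambda>a. \<Sum>b\<in>B. f a b * X$$(b,q)"] a by simp
  qed
  have "\<forall>q<n. (\<Sum>b\<in>B. cnj (f a0 b) * X$$(q,b)) = 0"
  proof (intro allI impI)
    fix q assume q: "q < n"
    have "(\<Sum>b\<in>B. cnj (f a0 b) * X$$(q,b)) = cnj (\<Sum>b\<in>B. f a0 b * X$$(b,q))"
      using herm q B by (simp, intro sum.cong refl) (metis lessThan_iff subsetD)
    then show "(\<Sum>b\<in>B. cnj (f a0 b) * X$$(q,b)) = 0" using s1[OF q nz(1)] by simp
  qed
  then have "cnj (f a0 b0) = 0" using spec[OF ind, of "\<lambda>b. cnj (f a0 b)"] nz(2) by simp
  then show False using nz(3) by simp
qed

theorem mainTheorem8:
  fixes s :: nat and d m :: "nat \<Rightarrow> nat" and X :: "complex mat"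
  assumes "\<forall>k<s. d k \<ge> 1" and "\<forall>k<s. m k \<ge> 1"
    and "extreme_point_mat X (setC s d m)"
  shows "(vec_space.rank (tot_dim s d m) X)\<^sup>2 \<le> (\<Sum>k<s. (m k)\<^sup>2)"
proof (rule ccontr)
  define n where "n = tot_dim s d m"
  assume neg: "\<not> (vec_space.rank (tot_dim s d m) X)\<^sup>2 \<le> (\<Sum>k<s. (m k)\<^sup>2)"
  have Xin: "X \<in> setC s d m" and extX: "\<forall>A\<in>setC s d m. \<forall>B\<in>setC s d m. \<forall>t::real. 0 < t \<and> t < 1 \<and>
        X = complex_of_real t \<cdot>\<^sub>m A + complex_of_real (1 - t) \<cdot>\<^sub>m B \<longrightarrow> A = B"
    using assms(3) unfolding extreme_point_mat_def by auto
  have psdX: "psd_mat n X" and ptX: "\<forall>k<s. ptrace_blk d m k X = of_nat (d k) \<cdot>\<^sub>m 1\<^sub>m (m k)"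
    using Xin unfolding setC_def n_def by auto
  have Xc: "X \<in> carrier_mat n n" and adjX: "mat_adjoint X = X" using psdX unfolding psd_mat_def by auto
  have herm: "\<forall>i<n. \<forall>j<n. X$$(i,j) = cnj (X$$(j,i))" using adj_index[OF Xc] adjX by metis
  obtain B where B: "B \<subseteq> {..<n}" and cardB: "card B = vec_space.rank n X"
    and ind: "\<forall>l. (\<forall>i<n. (\<Sum>a\<in>B. l a * X$$(i,a)) = 0) \<longrightarrow> (\<forall>a\<in>B. l a = 0)"
    using rank_indep[OF Xc] by blast
  have finB: "finite B" using B finite_subset by blast
  define E where "E = Sigma {..<s} (\<lambda>k. {..<m k} \<times> {..<m k})"
  have finE: "finite E" unfolding E_def by auto
  have cardE: "card E = (\<Sum>k<s. (m k)\<^sup>2)" unfolding E_def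
    by (simp add: power2_eq_square card_cartesian_product)
  have cardQ: "card (B \<times> B) = (card B)\<^sup>2" by (simp add: card_cartesian_product power2_eq_square)
  have lt: "card E < card (B \<times> B)" using neg cardE cardQ cardB n_def by simp
  define idx where "idx k i j = blk_off d m k + i * m k + j" for k i j
  have idx: "idx k i j < n" if "k < s" "i < d k" "j < m k" for k i j
    using idx_lt[of k s i d j m] that unfolding idx_def n_def by blast
  define c where "c e q = (case e of (k,j,j') \<Rightarrow> case q of (a,b) \<Rightarrow>
      \<Sum>i<d k. X$$(idx k i j, a) * X$$(b, idx k i j'))" for e q
  obtain x where xnz: "\<exists>q\<in>B\<times>B. x q \<noteq> 0" and xc: "\<forall>e\<in>E. (\<Sum>q\<in>B\<times>B. c e q * x q) = 0"
    using lin_sys[OF finE _ lt, of c] finB by auto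
  define P where "P f \<longleftrightarrow> (\<forall>k<s. \<forall>j<m k. \<forall>j'<m k.
      (\<Sum>i<d k. Dm X B f (idx k i j) (idx k i j')) = 0)" for f
  define f0 where "f0 a b = x (a,b)" for a b
  have Pf0: "P f0"
    unfolding P_def
  proof (intro allI impI)
    fix k j j' assume k: "k < s" and j: "j < m k" and j': "j' < m k"
    have "(k,j,j') \<in> E" unfolding E_def using k j j' by auto
    hence "(\<Sum>q\<in>B\<times>B. c (k,j,j') q * x q) = 0" using xc by blast
    moreover have "(\<Sum>q\<in>B\<times>B. c (k,j,j') q * x q) = (\<Sum>i<d k. Dm X B f0 (idx k i j) (idx k i j'))"
    proof -
      have "(\<Sum>q\<in>B\<times>B. c (k,j,j') q * x q) =
          (\<Sum>a\<in>B. \<Sum>b\<in>B. (\<Sum>i<d k. X$$(idx k i j, a) * X$$(b, idx k i j')) * x (a,b))"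
        unfolding c_def sum.cartesian_product by (intro sum.cong refl) (auto split: prod.splits)
      also have "\<dots> = (\<Sum>a\<in>B. \<Sum>b\<in>B. \<Sum>i<d k. X$$(idx k i j, a) * f0 a b * X$$(b, idx k i j'))"
        unfolding f0_def by (simp add: sum_distrib_right sum_distrib_left mult_ac)
      also have "\<dots> = (\<Sum>a\<in>B. \<Sum>i<d k. \<Sum>b\<in>B. X$$(idx k i j, a) * f0 a b * X$$(b, idx k i j'))"
        by (rule sum.cong[OF refl], rule sum.swap)
      also have "\<dots> = (\<Sum>i<d k. \<Sum>a\<in>B. \<Sum>b\<in>B. X$$(idx k i j, a) * f0 a b * X$$(b, idx k i j'))"
        by (rule sum.swap)
      also have "\<dots> = (\<Sum>i<d k. Dm X B f0 (idx k i j) (idx k i j'))" unfolding Dm_def ..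
      finally show ?thesis .
    qed
    ultimately show "(\<Sum>i<d k. Dm X B f0 (idx k i j) (idx k i j')) = 0" by simp
  qed
  have Padj: "P (\<lambda>a b. cnj (f b a))" if Pf: "P f" for f
    unfolding P_def
  proof (intro allI impI)
    fix k j j' assume k: "k < s" and j: "j < m k" and j': "j' < m k"
    have "(\<Sum>i<d k. Dm X B (\<lambda>a b. cnj (f b a)) (idx k i j) (idx k i j')) =
        (\<Sum>i<d k. cnj (Dm X B f (idx k i j') (idx k i j)))"
      using Dm_adj[OF herm B] idx k j j' by (intro sum.cong refl) auto
    also have "\<dots> = cnj (\<Sum>i<d k. Dm X B f (idx k i j') (idx k i j))" by simp
    also have "\<dots> = 0" using Pf k j j' unfolding P_def by simp
    finally show "(\<Sum>i<d k. Dm X B (\<lambda>a b. cnj (f b a)) (idx k i j) (idx k i j')) = 0" .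
  qed
  have Plin: "P (\<lambda>a b. \<alpha> * f a b + \<beta> * g a b)" if "P f" "P g" for \<alpha> \<beta> f g
    using that unfolding P_def Dm_lin by (simp add: sum.distrib sum_distrib_left[symmetric])
  obtain a0 b0 where ab0: "a0 \<in> B" "b0 \<in> B" "f0 a0 b0 \<noteq> 0" using xnz unfolding f0_def by auto
  define f1 where "f1 a b = 1 * f0 a b + 1 * cnj (f0 b a)" for a b
  define f2 where "f2 a b = \<i> * f0 a b + (- \<i>) * cnj (f0 b a)" for a b
  have Pf1: "P f1" unfolding f1_def[abs_def] by (rule Plin[OF Pf0 Padj[OF Pf0]])
  have Pf2: "P f2" unfolding f2_def[abs_def] by (rule Plin[OF Pf0 Padj[OF Pf0]])
  have h1: "(\<lambda>a b. cnj (f1 b a)) = f1" unfolding f1_def by (intro ext) (simp add: add.commute)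
  have h2: "(\<lambda>a b. cnj (f2 b a)) = f2" unfolding f2_def by (intro ext) (simp add: algebra_simps)
  have "f1 a0 b0 - \<i> * f2 a0 b0 = 2 * f0 a0 b0" unfolding f1_def f2_def by (simp add: algebra_simps)
  hence "f1 a0 b0 \<noteq> 0 \<or> f2 a0 b0 \<noteq> 0" using ab0(3) by auto
  then obtain f where Pf: "P f" and hf: "(\<lambda>a b. cnj (f b a)) = f" and fnz: "f a0 b0 \<noteq> 0"
    using Pf1 Pf2 h1 h2 by blast
  define D where "D p q = Dm X B f p q" for p q
  have Dh: "D p q = cnj (D q p)" if "p < n" "q < n" for p q
    using Dm_adj[OF herm B that, of f] unfolding hf D_def .
  obtain p0 q0 where pq0: "p0 < n" "q0 < n" "D p0 q0 \<noteq> 0"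
    using Dm_nz[OF herm B ind ab0(1,2), of f] fnz unfolding D_def by blast
  define Me where "Me = (\<Sum>a\<in>B. \<Sum>b\<in>B. cmod (f a b))"
  define Mx where "Mx = (\<Sum>i<n. \<Sum>j<n. cmod (X$$(i,j))) + 1"
  define \<epsilon> where "\<epsilon> = 1 / (Me * Mx + 1)"
  have Me0: "Me \<ge> 0" unfolding Me_def by (intro sum_nonneg) auto
  have Mx0: "Mx \<ge> 1" unfolding Mx_def by (simp add: sum_nonneg)
  have MM: "0 \<le> Me * Mx" using Me0 Mx0 by simp
  have eps0: "\<epsilon> > 0" unfolding \<epsilon>_def using MM by simp
  have eps1: "\<epsilon> * (Me * Mx) \<le> 1" unfolding \<epsilon>_def using MM by (simp add: field_simps)
  define Y where "Y t = mat n n (\<lambda>(p,q). X$$(p,q) + complex_of_real t * D p q)" for t :: real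
  have YC: "Y t \<in> setC s d m" if t: "\<bar>t\<bar> \<le> \<epsilon>" for t
  proof -
    have Yc: "Y t \<in> carrier_mat n n" unfolding Y_def by simp
    have Yadj: "mat_adjoint (Y t) = Y t"
    proof (rule eq_matI)
      fix i j assume "i < dim_row (Y t)" "j < dim_col (Y t)"
      hence ij: "i < n" "j < n" using Yc by auto
      show "mat_adjoint (Y t) $$ (i,j) = Y t $$ (i,j)"
      proof -
        have 1: "cnj (X$$(j,i)) = X$$(i,j)" using herm ij by metis
        have 2: "cnj (D j i) = D i j" using Dh[OF ij] by simp
        show ?thesis unfolding adj_index[OF Yc ij] using ij unfolding Y_def by (simp add: 1 2)
      qed
    qed (use adj_carrier[OF Yc] Yc in auto)
    have Yq: "Im (conjugate v \<bullet> (Y t *\<^sub>v v)) = 0 \<and> Re (conjugate v \<bullet> (Y t *\<^sub>v v)) \<ge> 0"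
      if v: "v \<in> carrier_vec n" for v
    proof -
      define w where "w i = v $ i" for i
      define u where "u a = (\<Sum>q\<in>{..<n}. X$$(a,q) * w q)" for a
      define qX where "qX = qfI {..<n} (\<lambda>i j. X$$(i,j)) w"
      define z where "z = qfI B f u"
      have "conjugate v \<bullet> (Y t *\<^sub>v v) = qfI {..<n} (\<lambda>i j. Y t $$ (i,j)) w"
        using sprod_qfI[OF Yc v] unfolding w_def .
      also have "\<dots> = qfI {..<n} (\<lambda>i j. X$$(i,j) + complex_of_real t * D i j) w"
        unfolding qfI_def by (intro sum.cong refl) (simp add: Y_def)
      also have "\<dots> = qX + complex_of_real t * qfI {..<n} D w"
        unfolding qfI_def qX_def by (simp add: sum.distrib sum_distrib_left algebra_simps)
      finally have e1: "conjugate v \<bullet> (Y t *\<^sub>v v) = qX + complex_of_real t * qfI {..<n} D w" .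
      have e2: "qfI {..<n} D w = z"
      proof -
        have "qfI {..<n} D w = qfI {..<n} (\<lambda>p q. \<Sum>a\<in>B. \<Sum>b\<in>B. X$$(p,a) * f a b * X$$(b,q)) w"
          unfolding D_def Dm_def ..
        also have "\<dots> = (\<Sum>a\<in>B. \<Sum>b\<in>B. (\<Sum>p\<in>{..<n}. cnj (w p) * X$$(p,a)) * f a b * (\<Sum>q\<in>{..<n}. X$$(b,q) * w q))"
          by (rule qfI_sandwich) (auto simp: finB)
        also have "\<dots> = (\<Sum>a\<in>B. \<Sum>b\<in>B. cnj (u a) * f a b * u b)"
        proof (intro sum.cong refl)
          fix a b assume a: "a \<in> B" and "b \<in> B"
          have an: "a < n" using a B by auto
          have "cnj (u a) = (\<Sum>p\<in>{..<n}. cnj (w p) * X$$(p,a))"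
            unfolding u_def cnj_sum
          proof (intro sum.cong refl)
            fix q assume "q \<in> {..<n}"
            hence "X$$(q,a) = cnj (X$$(a,q))" using herm an by blast
            then show "cnj (X $$ (a, q) * w q) = cnj (w q) * X $$ (q, a)" by simp
          qed
          then show "(\<Sum>p\<in>{..<n}. cnj (w p) * X$$(p,a)) * f a b * (\<Sum>q\<in>{..<n}. X$$(b,q) * w q)
              = cnj (u a) * f a b * u b" unfolding u_def by simp
        qed
        also have "\<dots> = z" unfolding z_def qfI_def ..
        finally show ?thesis .
      qed
      have r1: "Im qX = 0" "Re qX \<ge> 0" using psd_qfI[OF psdX] unfolding qX_def by auto
      have r2: "Im z = 0" unfolding z_def
        by (rule qfI_real, rule qfI_herm) (metis hf)
      have b1: "cmod z \<le> Me * (\<Sum>a\<in>B. (cmod (u a))\<^sup>2)"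
        unfolding z_def Me_def by (rule qfI_bound[OF finB])
      have b2: "(\<Sum>a\<in>B. (cmod (u a))\<^sup>2) \<le> (\<Sum>a\<in>{..<n}. (cmod (u a))\<^sup>2)"
        using B by (intro sum_mono2) auto
      have b3: "(\<Sum>a\<in>{..<n}. (cmod (u a))\<^sup>2) \<le> Mx * Re qX"
        unfolding u_def qX_def
      proof (rule sq_bound)
        show "\<forall>i\<in>{..<n}. \<forall>j\<in>{..<n}. X $$ (i, j) = cnj (X $$ (j, i))" using herm by blast
        show "\<And>u. 0 \<le> Re (qfI {..<n} (\<lambda>i j. X $$ (i, j)) u)" using psd_qfI[OF psdX] by auto
        show "(\<Sum>i\<in>{..<n}. \<Sum>j\<in>{..<n}. cmod (X $$ (i, j))) \<le> Mx" unfolding Mx_def by simp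
        show "0 < Mx" using Mx0 by simp
      qed simp
      have "cmod z \<le> Me * (Mx * Re qX)"
        using b1 b2 b3 Me0 by (meson mult_left_mono order_trans)
      hence "\<bar>t\<bar> * cmod z \<le> \<epsilon> * (Me * (Mx * Re qX))"
        using t by (intro mult_mono) auto
      also have "\<dots> = (\<epsilon> * (Me * Mx)) * Re qX" by simp
      also have "\<dots> \<le> Re qX" by (rule mult_left_le_one_le) (use r1(2) eps1 eps0 MM in auto)
      finally have "\<bar>t\<bar> * cmod z \<le> Re qX" .
      moreover have "\<bar>t * Re z\<bar> \<le> \<bar>t\<bar> * cmod z"
        by (simp add: abs_mult abs_Re_le_cmod mult_left_mono)
      ultimately have "Re qX + t * Re z \<ge> 0" by linarith
      then show ?thesis unfolding e1 e2 using r1 r2 by simp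
    qed
    have pt: "ptrace_blk d m k (Y t) = of_nat (d k) \<cdot>\<^sub>m 1\<^sub>m (m k)" if k: "k < s" for k
    proof -
      have "ptrace_blk d m k (Y t) = ptrace_blk d m k X"
        unfolding ptrace_blk_def
      proof (rule eq_matI)
        fix j j' assume "j < dim_row (mat (m k) (m k) (\<lambda>(j, j'). \<Sum>i<d k. X $$ (blk_off d m k + i * m k + j, blk_off d m k + i * m k + j')))"
          "j' < dim_col (mat (m k) (m k) (\<lambda>(j, j'). \<Sum>i<d k. X $$ (blk_off d m k + i * m k + j, blk_off d m k + i * m k + j')))"
        hence jj: "j < m k" "j' < m k" by auto
        have "(\<Sum>i<d k. Y t $$ (idx k i j, idx k i j')) =
            (\<Sum>i<d k. X $$ (idx k i j, idx k i j') + complex_of_real t * D (idx k i j) (idx k i j'))"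
          using idx k jj by (intro sum.cong refl) (simp add: Y_def)
        also have "\<dots> = (\<Sum>i<d k. X $$ (idx k i j, idx k i j')) + complex_of_real t * (\<Sum>i<d k. D (idx k i j) (idx k i j'))"
          by (simp add: sum.distrib sum_distrib_left)
        also have "(\<Sum>i<d k. D (idx k i j) (idx k i j')) = 0"
          using Pf k jj unfolding P_def D_def by simp
        finally have "(\<Sum>i<d k. Y t $$ (idx k i j, idx k i j')) = (\<Sum>i<d k. X $$ (idx k i j, idx k i j'))" by simp
        then show "mat (m k) (m k) (\<lambda>(j, j'). \<Sum>i<d k. Y t $$ (blk_off d m k + i * m k + j, blk_off d m k + i * m k + j')) $$ (j, j') =
          mat (m k) (m k) (\<lambda>(j, j'). \<Sum>i<d k. X $$ (blk_off d m k + i * m k + j, blk_off d m k + i * m k + j')) $$ (j, j')"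
          using jj unfolding idx_def by simp
      qed auto
      then show ?thesis using ptX k by simp
    qed
    show ?thesis unfolding setC_def psd_mat_def n_def[symmetric]
      using Yc Yadj Yq pt by blast
  qed
  have "X = complex_of_real (1/2) \<cdot>\<^sub>m Y \<epsilon> + complex_of_real (1 - 1/2) \<cdot>\<^sub>m Y (- \<epsilon>)"
  proof (rule eq_matI)
    fix i j assume "i < dim_row (complex_of_real (1/2) \<cdot>\<^sub>m Y \<epsilon> + complex_of_real (1 - 1/2) \<cdot>\<^sub>m Y (- \<epsilon>))"
      "j < dim_col (complex_of_real (1/2) \<cdot>\<^sub>m Y \<epsilon> + complex_of_real (1 - 1/2) \<cdot>\<^sub>m Y (- \<epsilon>))"
    hence ij: "i < n" "j < n" by (auto simp: Y_def)
    show "X $$ (i,j) = (complex_of_real (1/2) \<cdot>\<^sub>m Y \<epsilon> + complex_of_real (1 - 1/2) \<cdot>\<^sub>m Y (- \<epsilon>)) $$ (i,j)"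
      using ij by (simp add: Y_def algebra_simps)
  qed (use Xc in \<open>auto simp: Y_def\<close>)
  moreover have "Y \<epsilon> \<in> setC s d m" "Y (- \<epsilon>) \<in> setC s d m" using YC eps0 by auto
  ultimately have "Y \<epsilon> = Y (- \<epsilon>)"
    using extX[rule_format, of "Y \<epsilon>" "Y (- \<epsilon>)" "1/2"] by simp
  hence "Y \<epsilon> $$ (p0,q0) = Y (- \<epsilon>) $$ (p0,q0)" by simp
  hence "complex_of_real \<epsilon> * D p0 q0 = 0" using pq0 by (simp add: Y_def)
  thus False using eps0 pq0 by simp
qed

end
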